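(* For Algorithm 1 run for any number $T$ of iterations, for every outcome of its random choices and every $i\in[n]$, $S_i\ge -\frac{w\log(2n)}{\alpha}$.
   Context: Standing setup: $A\in\mathbb{R}^{m\times n}_{\ge 0}$ has no zero column and is normalized so that $\min_{i\in[n]}\|A_{:i}\|_\infty=1$, where $A_{:i}$ denotes the $i$-th column. $\epsilon\in(0,1/2]$. $\log$ is natural unless written $\log_2$. $\mu=\frac{\epsilon}{4\log(nm/\epsilon)}$, $p_j(x)=\exp\big(\frac{1}{\mu}((Ax)_j-1)\big)$, $f_\mu(x)=-\mathbf 1^Tx+\mu\sum_jp_j(x)$, $\nabla_i f_\mu(x)=-1+\sum_jA_{ji}p_j(x)$. Algorithm 1 with $T$ iterations: set $\alpha=\mu/20$, $w=\lceil\log_2(1/\epsilon)\rceil$, $x_0[i]=\frac{1-\epsilon/2}{n\|A_{:i}\|_\infty}$. For $k=0,\dots,T-1$: choose $t_k\in\{0,\dots,w-1\}$ uniformly at random, independently of the past; writing $g_i=\nabla_i f_\mu(x_k)$, define $\xi_k[i]=0$ if $|g_i|\le\epsilon$, $\xi_k[i]=g_i$ if $\epsilon<|g_i|\le 1$, $\xi_k[i]=1$ if $g_i>1$; $\xi^{(t)}_k[i]=\xi_k[i]$ if $\epsilon2^t<|\xi_k[i]|\le\epsilon2^{t+1}$ and $0$ otherwise; $x_{k+1}[i]=x_k[i]\exp(-\alpha\,\xi^{(t_k)}_k[i])$. Bucket indicators: for each $k,i$, let $b_k(i)\in\{0,\dots,w-1\}$ be the unique $t$ with $\epsilon2^t<|\xi_k[i]|\le\epsilon2^{t+1}$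 if $\xi_k[i]\ne0$, and $b_k(i)=0$ if $\xi_k[i]=0$; let $Z^{(i)}_k=1$ if $t_k=b_k(i)$ and $0$ otherwise. Define $S_i=w\sum_{k=0}^{T-1}Z^{(i)}_k\big(\min\{\nabla_i f_\mu(x_k),1\}+\epsilon\big)$. *)

theory Defs
  imports Complex_Main
begin

text \<open>The matrix A (m rows, n columns) is a function nat => nat => real, with
  A j i the entry in row j < m, column i < n. Vectors x in R^n are nat => real
  (only indices i < n are relevant).\<close>

definition colnorm :: "(nat \<Rightarrow> nat \<Rightarrow> real) \<Rightarrow> nat \<Rightarrow> nat \<Rightarrow> real" where
  "colnorm A m i = Max ((\<lambda>j. \<bar>A j i\<bar>) ` {..<m})"

definition mu :: "nat \<Rightarrow> nat \<Rightarrow> real \<Rightarrow> real" where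
  "mu n m eps = eps / (4 * ln (real n * real m / eps))"

definition alpha :: "nat \<Rightarrow> nat \<Rightarrow> real \<Rightarrow> real" where
  "alpha n m eps = mu n m eps / 20"

definition wdt :: "real \<Rightarrow> nat" where
  "wdt eps = nat \<lceil>log 2 (1 / eps)\<rceil>"

definition Ax :: "(nat \<Rightarrow> nat \<Rightarrow> real) \<Rightarrow> nat \<Rightarrow> (nat \<Rightarrow> real) \<Rightarrow> nat \<Rightarrow> real" where
  "Ax A n x j = (\<Sum>i<n. A j i * x i)"

definition pj :: "(nat \<Rightarrow> nat \<Rightarrow> real) \<Rightarrow> nat \<Rightarrow> nat \<Rightarrow> real \<Rightarrow> (nat \<Rightarrow> real) \<Rightarrow> nat \<Rightarrow> real" where
  "pj A m n eps x j = exp ((1 / mu n m eps) * (Ax A n x j - 1))"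

definition grad :: "(nat \<Rightarrow> nat \<Rightarrow> real) \<Rightarrow> nat \<Rightarrow> nat \<Rightarrow> real \<Rightarrow> (nat \<Rightarrow> real) \<Rightarrow> nat \<Rightarrow> real" where
  "grad A m n eps x i = -1 + (\<Sum>j<m. A j i * pj A m n eps x j)"

definition clip :: "real \<Rightarrow> real \<Rightarrow> real" where
  "clip eps g = (if \<bar>g\<bar> \<le> eps then 0 else if g > 1 then 1 else g)"

definition bucketpart :: "real \<Rightarrow> nat \<Rightarrow> real \<Rightarrow> real" where
  "bucketpart eps t v = (if eps * 2 ^ t < \<bar>v\<bar> \<and> \<bar>v\<bar> \<le> eps * 2 ^ (t + 1) then v else 0)"

definition bucket :: "real \<Rightarrow> real \<Rightarrow> nat" where
  "bucket eps v = (if v = 0 then 0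
     else (THE t. eps * 2 ^ t < \<bar>v\<bar> \<and> \<bar>v\<bar> \<le> eps * 2 ^ (t + 1)))"

text \<open>Iterates of Algorithm 1, given the sequence ts of random choices t_k.\<close>
primrec iter :: "(nat \<Rightarrow> nat \<Rightarrow> real) \<Rightarrow> nat \<Rightarrow> nat \<Rightarrow> real \<Rightarrow> (nat \<Rightarrow> nat) \<Rightarrow> nat \<Rightarrow> nat \<Rightarrow> real" where
  "iter A m n eps ts 0 = (\<lambda>i. (1 - eps / 2) / (real n * colnorm A m i))"
| "iter A m n eps ts (Suc k) = (\<lambda>i. iter A m n eps ts k i *
      exp (- alpha n m eps * bucketpart eps (ts k) (clip eps (grad A m n eps (iter A m n eps ts k) i))))"

definition Zind :: "(nat \<Rightarrow> nat \<Rightarrow> real) \<Rightarrow> nat \<Rightarrow> nat \<Rightarrow> real \<Rightarrow> (nat \<Rightarrow> nat) \<Rightarrow> nat \<Rightarrow> nat \<Rightarrow> real" where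
  "Zind A m n eps ts k i =
     (if ts k = bucket eps (clip eps (grad A m n eps (iter A m n eps ts k) i)) then 1 else 0)"

definition Ssum :: "(nat \<Rightarrow> nat \<Rightarrow> real) \<Rightarrow> nat \<Rightarrow> nat \<Rightarrow> real \<Rightarrow> (nat \<Rightarrow> nat) \<Rightarrow> nat \<Rightarrow> nat \<Rightarrow> real" where
  "Ssum A m n eps ts T i = real (wdt eps) * (\<Sum>k<T. Zind A m n eps ts k i *
      (min (grad A m n eps (iter A m n eps ts k) i) 1 + eps))"

end

theory Submission
  imports Defs
begin

lemma exists_bucket:
  fixes eps a :: real
  assumes "0 < eps" "eps < a"
  shows "\<exists>t. eps * 2 ^ t < a \<and> a \<le> eps * 2 ^ (t + 1)"
proof -
  obtain N :: nat where "a / eps < 2 ^ N" using real_arch_pow[of 2 "a/eps"] by auto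
  hence N: "a \<le> eps * 2 ^ N" using assms by (simp add: field_simps)
  define t where "t = (LEAST t. a \<le> eps * 2 ^ t)"
  have ht: "a \<le> eps * 2 ^ t" unfolding t_def by (rule LeastI[of _ N]) (rule N)
  have "t \<noteq> 0"
  proof
    assume "t = 0"
    with ht assms show False by simp
  qed
  then obtain s where s: "t = Suc s" by (cases t) auto
  have "\<not> a \<le> eps * 2 ^ s"
  proof
    assume "a \<le> eps * 2 ^ s"
    hence "t \<le> s" unfolding t_def by (rule Least_le)
    with s show False by simp
  qed
  thus ?thesis using ht s by (intro exI[of _ s]) auto
qed

lemma bucket_unique:
  fixes eps v :: real
  assumes "0 < eps" "eps * 2 ^ t < \<bar>v\<bar>" "\<bar>v\<bar> \<le> eps * 2 ^ (t + 1)"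
  shows "bucket eps v = t"
proof -
  have v0: "v \<noteq> 0" proof
    assume "v = 0"
    have "0 < eps * 2 ^ t" using assms(1) by simp
    thus False using assms(2) \<open>v = 0\<close> by simp
  qed
  have uniq: "s = t" if "eps * 2 ^ s < \<bar>v\<bar>" "\<bar>v\<bar> \<le> eps * 2 ^ (s + 1)" for s
  proof (rule ccontr)
    assume "s \<noteq> t"
    then consider "s + 1 \<le> t" | "t + 1 \<le> s" by linarith
    then show False
    proof cases
      case 1
      have "(2::real) ^ (s+1) \<le> 2 ^ t" using 1 by (intro power_increasing) auto
      hence "eps * 2 ^ (s+1) \<le> eps * 2 ^ t" using assms(1) by (intro mult_left_mono) auto
      thus False using that assms by linarith
    next
      case 2
      have "(2::real) ^ (t+1) \<le> 2 ^ s" using 2 by (intro power_increasing) auto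
      hence "eps * 2 ^ (t+1) \<le> eps * 2 ^ s" using assms(1) by (intro mult_left_mono) auto
      thus False using that assms by linarith
    qed
  qed
  have "(THE s. eps * 2 ^ s < \<bar>v\<bar> \<and> \<bar>v\<bar> \<le> eps * 2 ^ (s + 1)) = t"
  proof (rule the_equality)
    show "eps * 2 ^ t < \<bar>v\<bar> \<and> \<bar>v\<bar> \<le> eps * 2 ^ (t + 1)" using assms by simp
  next
    fix s assume "eps * 2 ^ s < \<bar>v\<bar> \<and> \<bar>v\<bar> \<le> eps * 2 ^ (s + 1)"
    thus "s = t" using uniq by blast
  qed
  thus ?thesis using v0 unfolding bucket_def by simp
qed

lemma bucket_prop:
  fixes eps v :: real
  assumes "0 < eps" "eps < \<bar>v\<bar>"
  shows "eps * 2 ^ bucket eps v < \<bar>v\<bar> \<and> \<bar>v\<bar> \<le> eps * 2 ^ (bucket eps v + 1)"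
proof -
  obtain t where t: "eps * 2 ^ t < \<bar>v\<bar>" "\<bar>v\<bar> \<le> eps * 2 ^ (t + 1)"
    using exists_bucket[OF assms] by blast
  have "bucket eps v = t" using bucket_unique[OF assms(1) t] .
  thus ?thesis using t by simp
qed

lemma step_ineq:
  fixes eps g :: real
  assumes "0 < eps" "g \<ge> -1" "eps < 1"
  shows "(if t = bucket eps (clip eps g) then 1 else 0) * (min g 1 + eps)
          \<ge> bucketpart eps t (clip eps g)"
proof (cases "t = bucket eps (clip eps g)")
  case True
  show ?thesis
  proof (cases "\<bar>g\<bar> \<le> eps")
    case True
    thus ?thesis using \<open>t = _\<close> by (simp add: clip_def bucketpart_def)
  next
    case False
    hence v: "eps < \<bar>clip eps g\<bar>" using assms by (auto simp: clip_def)
    have "bucketpart eps t (clip eps g) = clip eps g"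
      using bucket_prop[OF assms(1) v] True by (simp add: bucketpart_def)
    moreover have "clip eps g \<le> min g 1 + eps" using assms False by (auto simp: clip_def)
    ultimately show ?thesis using True by simp
  qed
next
  case False
  have "bucketpart eps t (clip eps g) = 0"
  proof (rule ccontr)
    assume "bucketpart eps t (clip eps g) \<noteq> 0"
    hence h: "eps * 2 ^ t < \<bar>clip eps g\<bar>" "\<bar>clip eps g\<bar> \<le> eps * 2 ^ (t + 1)"
      by (auto simp: bucketpart_def split: if_splits)
    from bucket_unique[OF assms(1) h] False show False by simp
  qed
  thus ?thesis using False by simp
qed

theorem lemma4p2:
  fixes A :: "nat \<Rightarrow> nat \<Rightarrow> real" and m n T i :: nat and eps :: real
    and ts :: "nat \<Rightarrow> nat"
  assumes "0 < m" and "0 < n"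
    and "\<forall>j<m. \<forall>i'<n. 0 \<le> A j i'"
    and "\<forall>i'<n. \<exists>j<m. A j i' \<noteq> 0"
    and "Min ((\<lambda>i'. colnorm A m i') ` {..<n}) = 1"
    and "0 < eps" and "eps \<le> 1 / 2"
    and "\<forall>k. ts k < wdt eps"
    and "i < n"
  shows "Ssum A m n eps ts T i \<ge> - (real (wdt eps) * ln (2 * real n)) / alpha n m eps"
proof -
  note A0 = assms(3)
  have eps1: "eps < 1" using assms(7) by simp
  have epos2: "eps * 2 ^ t > 0" for t :: nat using assms(6) by simp
  define c where "c = colnorm A m i"
  define al where "al = alpha n m eps"
  define x where "x = iter A m n eps ts"
  define g where "g k = grad A m n eps (x k) i" for k
  define bp where "bp k = bucketpart eps (ts k) (clip eps (g k))" for k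
  define L where "L = ln (real n * real m / eps)"
  have n1: "real n \<ge> 1" and m1: "real m \<ge> 1" using assms(1,2) by auto
  have nm: "real n * real m \<ge> 1" using n1 m1 by (metis mult_mono' mult_1 zero_le_one)
  have q2: "real n * real m / eps \<ge> 2" using nm assms(6,7) by (simp add: field_simps)
  have ln2: "ln 2 \<ge> (1/2::real)"
  proof -
    have "norm (exp (1/2::real)) \<le> 1 + 2 * norm (1/2::real)" by (rule exp_bound_lemma) simp
    hence "exp (1/2::real) \<le> 2" by simp
    thus ?thesis by (subst ln_ge_iff) auto
  qed
  have "ln 2 \<le> L" unfolding L_def using q2 by (subst ln_le_cancel_iff) auto
  hence L2: "L \<ge> 1/2" using ln2 by linarith
  have mu_eq: "mu n m eps = eps / (4 * L)" unfolding mu_def L_def by simp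
  have alpos: "al > 0" unfolding al_def alpha_def mu_eq using L2 assms(6) by simp
  have alsmall: "al \<le> 1/80"
  proof -
    have "al = eps / (80 * L)" unfolding al_def alpha_def mu_eq by simp
    also have "\<dots> \<le> (1/2) / (80 * (1/2))" using L2 assms(6,7)
      by (intro frac_le) auto
    finally show ?thesis by simp
  qed
  have expal: "exp al \<le> 3/2"
  proof -
    have "norm (exp al) \<le> 1 + 2 * norm al" by (rule exp_bound_lemma) (use alsmall alpos in auto)
    thus ?thesis using alsmall alpos by simp
  qed
  have colpos: "colnorm A m i' > 0" if hi: "i' < n" for i'
  proof -
    obtain j where j: "j < m" "A j i' \<noteq> 0" using assms(4) hi by blast
    have "\<bar>A j i'\<bar> \<le> colnorm A m i'" unfolding colnorm_def using j by (intro Max_ge) auto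
    thus ?thesis using j by linarith
  qed
  have c1: "c \<ge> 1"
  proof -
    have "Min ((\<lambda>i'. colnorm A m i') ` {..<n}) \<le> colnorm A m i" using assms(9) by (intro Min_le) auto
    thus ?thesis using assms(5) unfolding c_def by simp
  qed
  obtain j0 where j0: "j0 < m" "A j0 i = c"
  proof -
    have "c \<in> (\<lambda>j. \<bar>A j i\<bar>) ` {..<m}" unfolding c_def colnorm_def using assms(1)
      by (intro Max_in) auto
    then obtain j where "j < m" "\<bar>A j i\<bar> = c" by auto
    thus ?thesis using that A0 assms(9) by auto
  qed
  have xpos: "\<forall>i'<n. x k i' > 0" for k
  proof (induction k)
    case 0
    show ?case unfolding x_def using colpos assms(2,6,7) by (auto intro!: divide_pos_pos)
  next
    case (Suc k)
    thus ?case unfolding x_def by simp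
  qed
  have gge: "g k \<ge> -1" for k
  proof -
    have "(\<Sum>j<m. A j i * pj A m n eps (x k) j) \<ge> 0"
      using A0 assms(9) by (intro sum_nonneg) (auto simp: pj_def)
    thus ?thesis unfolding g_def grad_def by simp
  qed
  have xsuc: "x (Suc k) i = x k i * exp (- al * bp k)" for k
    unfolding x_def bp_def g_def al_def by simp
  have xbound: "x k i \<le> exp al / c" for k
  proof (induction k)
    case 0
    have "x 0 i = (1 - eps/2) / (real n * c)" unfolding x_def c_def by simp
    also have "\<dots> \<le> 1 / c"
    proof -
      have "1 - eps/2 \<le> real n" using n1 assms(6) by simp
      hence "1 - eps/2 \<le> real n * 1" by simp
      thus ?thesis using c1 n1 by (simp add: divide_le_eq field_simps)
    qed
    also have "\<dots> \<le> exp al / c" using c1 alpos by (simp add: divide_right_mono)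
    finally show ?case .
  next
    case (Suc k)
    show ?case
    proof (cases "bp k \<ge> 0")
      case True
      have "exp (- al * bp k) \<le> 1" using True alpos by simp
      hence "x (Suc k) i \<le> x k i" unfolding xsuc using xpos[of k] assms(9)
        by (simp add: mult_left_le)
      thus ?thesis using Suc by simp
    next
      case False
      have b1: "bp k = clip eps (g k)" using False unfolding bp_def bucketpart_def
        by (cases "eps * 2 ^ ts k < \<bar>clip eps (g k)\<bar> \<and> \<bar>clip eps (g k)\<bar> \<le> eps * 2 ^ (ts k + 1)") auto
      have c0: "clip eps (g k) < 0" using b1 False by simp
      have bpg: "bp k = g k" "g k < - eps"
      proof -
        have "\<not> \<bar>g k\<bar> \<le> eps" using c0 unfolding clip_def by auto
        moreover have "\<not> g k > 1" using c0 \<open>\<not> \<bar>g k\<bar> \<le> eps\<close> unfolding clip_def by auto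
        ultimately have "clip eps (g k) = g k" unfolding clip_def by simp
        thus "bp k = g k" using b1 by simp
        show "g k < - eps" using \<open>clip eps (g k) = g k\<close> c0 \<open>\<not> \<bar>g k\<bar> \<le> eps\<close> by linarith
      qed
      have sum_lt: "(\<Sum>j<m. A j i * pj A m n eps (x k) j) < 1"
        using bpg assms(6) unfolding g_def grad_def by simp
      have "c * pj A m n eps (x k) j0 \<le> (\<Sum>j<m. A j i * pj A m n eps (x k) j)"
        using j0 A0 assms(9) by (subst j0(2)[symmetric], intro member_le_sum) (auto simp: pj_def)
      hence "c * pj A m n eps (x k) j0 < 1" using sum_lt by linarith
      moreover have "pj A m n eps (x k) j0 \<le> c * pj A m n eps (x k) j0"
        using mult_right_mono[OF c1, of "pj A m n eps (x k) j0"] by (simp add: pj_def)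
      ultimately have "pj A m n eps (x k) j0 < 1" by linarith
      hence "(1 / mu n m eps) * (Ax A n (x k) j0 - 1) < 0" unfolding pj_def by simp
      moreover have "mu n m eps > 0" using alpos unfolding al_def alpha_def by simp
      ultimately have ax: "Ax A n (x k) j0 < 1"
        by (simp add: divide_less_0_iff)
      have "c * x k i \<le> Ax A n (x k) j0" unfolding Ax_def
        using j0 A0 assms(9) xpos[of k] by (subst j0(2)[symmetric], intro member_le_sum)
          (auto intro!: mult_nonneg_nonneg simp: order_less_imp_le)
      hence xk: "x k i \<le> 1 / c" using ax c1 by (simp add: field_simps)
      have "al * (- bp k) \<le> al * 1" using bpg gge[of k] alpos by (intro mult_left_mono) auto
      hence "exp (- al * bp k) \<le> exp al" by simp
      hence "x (Suc k) i \<le> (1/c) * exp al" unfolding xsuc using xk xpos[of k] assms(9) c1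
        by (intro mult_mono) auto
      thus ?thesis by simp
    qed
  qed
  have tele: "ln (x T i) = ln (x 0 i) - al * (\<Sum>k<T. bp k)"
  proof (induction T)
    case 0 show ?case by simp
  next
    case (Suc T)
    have xp: "x T i > 0" using xpos[of T] assms(9) by simp
    have "ln (x (Suc T) i) = ln (x T i) + ln (exp (- al * bp T))" unfolding xsuc
      using xp by (intro ln_mult_pos) auto
    hence "ln (x (Suc T) i) = ln (x T i) + (- al * bp T)" by simp
    thus ?case using Suc by (simp add: algebra_simps)
  qed
  have ratio: "x T i \<le> 2 * real n * x 0 i"
  proof -
    have "x 0 i = (1 - eps/2) / (real n * c)" unfolding x_def c_def by simp
    hence "2 * real n * x 0 i = (2 - eps) / c" using assms(2) c1 by (simp add: field_simps)
    moreover have "exp al / c \<le> (2 - eps) / c" using expal assms(7) c1 by (intro divide_right_mono) auto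
    ultimately show ?thesis using xbound[of T] by simp
  qed
  have lnr: "ln (x T i) \<le> ln (2 * real n) + ln (x 0 i)"
  proof -
    have p0: "x 0 i > 0" and pT: "x T i > 0" using xpos assms(9) by auto
    have "ln (x T i) \<le> ln (2 * real n * x 0 i)" using ratio p0 pT assms(2) by (subst ln_le_cancel_iff) auto
    also have "\<dots> = ln (2 * real n) + ln (x 0 i)" using p0 assms(2) by (intro ln_mult_pos) auto
    finally show ?thesis .
  qed
  have sumbp: "(\<Sum>k<T. bp k) \<ge> - ln (2 * real n) / al"
  proof -
    have "al * (\<Sum>k<T. bp k) \<ge> - ln (2 * real n)" using tele lnr by linarith
    thus ?thesis using alpos by (simp add: field_simps)
  qed
  have "(\<Sum>k<T. bp k) \<le> (\<Sum>k<T. Zind A m n eps ts k i * (min (grad A m n eps (iter A m n eps ts k) i) 1 + eps))"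
  proof (intro sum_mono)
    fix k
    show "bp k \<le> Zind A m n eps ts k i * (min (grad A m n eps (iter A m n eps ts k) i) 1 + eps)"
      using step_ineq[OF assms(6) gge[of k] eps1, of "ts k"]
      unfolding bp_def Zind_def g_def x_def by simp
  qed
  hence "Ssum A m n eps ts T i \<ge> real (wdt eps) * (\<Sum>k<T. bp k)"
    unfolding Ssum_def by (intro mult_left_mono) auto
  moreover have "real (wdt eps) * (\<Sum>k<T. bp k) \<ge> real (wdt eps) * (- ln (2 * real n) / al)"
    using sumbp by (intro mult_left_mono) auto
  moreover have "real (wdt eps) * (- ln (2 * real n) / al) = - (real (wdt eps) * ln (2 * real n)) / al"
    by simp
  ultimately show ?thesis unfolding al_def by linarith
qed

end
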